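(* Let $\pi:K\{X\}_\infty\to K\{X\}$ be the linear projection sending each binary monomial (and $1$) to itself and every non-binary monomial to $0$. Then the graded dual of $(K\{X\},\Delta_a)$ is the quotient of $(K\{X\}_\infty,\sqcup\!\sqcup)$ by $\ker\pi$; explicitly, identifying $K\{X\}$ with its graded dual via the dual basis of binary monomials, the multiplication dual to $\Delta_a|_{K\{X\}}$ is $g_1\otimes g_2\mapsto\pi(g_1\sqcup\!\sqcup g_2)$ for $g_1,g_2\in K\{X\}$.
   Context: $K$ is a field of characteristic $0$, $X=\{x_1,x_2,\dots\}$ a finite or countable set of variables. A planar rooted tree is reduced if no vertex has exactly one incoming edge. $K\{X\}_\infty$ has basis the monomials: the empty tree $1$ and all planar reduced rooted trees with leaves labelled by elements of $X$; for $k\ge2$, $\vee^k$ grafts $k$ nonempty trees onto a new root, extended multilinearly, with unit conventions (arguments $1$ omitted, $\vee^1=\mathrm{id}$, $\vee^k(1,\dots,1)=1$). $K\{X\}$ is the span of $1$ and the binary monomials (the free unitary magma algebra, $a\cdot b=\vee^2(a,b)$). Tensor squares carry the operations componentwise, and $\Delta_a$ is the unique unital homomorphism with $\Delta_a(x_i)=x_i\otimes1+1\otimes x_i$; it maps $K\{X\}$ into $K\{X\}\otimes K\{X\}$. $\langle\,,\rangle$ is the bilinear form making monomials orthonormal, extended to tensor products factorwise, and $\sqcup\!\sqcup$ on $K\{X\}_\infty$ is defined by $\langle g_1\sqcup\!\sqcup g_2,h\rangle=\langle g_1\otimes g_2,\Delta_a(h)\rangle$ for all $h\in K\{X\}_\infty$.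 *)

theory Defs
  imports Main "HOL-Library.Countable"
begin

text \<open>Planar rooted trees with leaves labelled by elements of the alphabet 'x.
  A monomial of K{X}_infinity is either the empty tree (None) or Some t with t reduced.\<close>

datatype 'x tree = Leaf 'x | Node "'x tree list"

type_synonym 'x mono = "'x tree option"

fun reduced :: "'x tree \<Rightarrow> bool" where
  "reduced (Leaf x) = True"
| "reduced (Node ts) = (2 \<le> length ts \<and> (\<forall>t\<in>set ts. reduced t))"

fun binary :: "'x tree \<Rightarrow> bool" where
  "binary (Leaf x) = True"
| "binary (Node ts) = (length ts = 2 \<and> (\<forall>t\<in>set ts. binary t))"

definition is_mono :: "'x mono \<Rightarrow> bool" where
  "is_mono m = (case m of None \<Rightarrow> True | Some t \<Rightarrow> reduced t)"

definition is_bin_mono :: "'x mono \<Rightarrow> bool" where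
  "is_bin_mono m = (case m of None \<Rightarrow> True | Some t \<Rightarrow> binary t)"

definition Kinf :: "('x mono \<Rightarrow> 'k::field) set" where
  "Kinf = {f. finite {m. f m \<noteq> 0} \<and> (\<forall>m. f m \<noteq> 0 \<longrightarrow> is_mono m)}"

definition KX :: "('x mono \<Rightarrow> 'k::field) set" where
  "KX = {f. finite {m. f m \<noteq> 0} \<and> (\<forall>m. f m \<noteq> 0 \<longrightarrow> is_bin_mono m)}"

text \<open>Grafting of monomials vee^k with unit conventions (arguments 1 omitted,
  vee^1 = id, vee^k(1,...,1) = 1).\<close>
definition graft :: "'x mono list \<Rightarrow> 'x mono" where
  "graft ms = (let ts = [t. Some t \<leftarrow> ms] in
     if ts = [] then None else if length ts = 1 then Some (hd ts) else Some (Node ts))"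

text \<open>Tensor square: coefficient functions on pairs of monomials; vee^k acts componentwise
  and multilinearly.\<close>
definition vee_t :: "(('x mono \<times> 'x mono) \<Rightarrow> 'k::field) list \<Rightarrow> ('x mono \<times> 'x mono) \<Rightarrow> 'k" where
  "vee_t Ts = (\<lambda>(a, b). \<Sum>ps \<in> {ps. length ps = length Ts \<and> (\<forall>i<length Ts. (Ts ! i) (ps ! i) \<noteq> 0)
        \<and> graft (map fst ps) = a \<and> graft (map snd ps) = b}.
      \<Prod>i<length Ts. (Ts ! i) (ps ! i))"

text \<open>Delta_a: the unital homomorphism with Delta_a(x) = x(x)1 + 1(x)x, written out on monomials.\<close>
fun deltaT :: "'x tree \<Rightarrow> ('x mono \<times> 'x mono) \<Rightarrow> 'k::field" where
  "deltaT (Leaf x) = (\<lambda>p. if p = (Some (Leaf x), None) \<or> p = (None, Some (Leaf x)) then 1 else 0)"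
| "deltaT (Node ts) = vee_t (map deltaT ts)"

definition delta_a :: "'x mono \<Rightarrow> ('x mono \<times> 'x mono) \<Rightarrow> 'k::field" where
  "delta_a m = (case m of None \<Rightarrow> (\<lambda>p. if p = (None, None) then 1 else 0) | Some t \<Rightarrow> deltaT t)"

definition tensor :: "('x mono \<Rightarrow> 'k::field) \<Rightarrow> ('x mono \<Rightarrow> 'k) \<Rightarrow> ('x mono \<times> 'x mono) \<Rightarrow> 'k" where
  "tensor g1 g2 = (\<lambda>(a, b). g1 a * g2 b)"

text \<open>The bilinear form making (pairs of) monomials orthonormal.\<close>
definition pairT :: "(('x mono \<times> 'x mono) \<Rightarrow> 'k::field) \<Rightarrow> (('x mono \<times> 'x mono) \<Rightarrow> 'k) \<Rightarrow> 'k" where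
  "pairT S T = (\<Sum>p \<in> {p. S p \<noteq> 0}. S p * T p)"

text \<open>Shuffle product: <g1 sh g2, h> = <g1 (x) g2, Delta_a h> for all monomials h.\<close>
definition shuffle :: "('x mono \<Rightarrow> 'k::field) \<Rightarrow> ('x mono \<Rightarrow> 'k) \<Rightarrow> 'x mono \<Rightarrow> 'k" where
  "shuffle g1 g2 = (\<lambda>h. if is_mono h then pairT (tensor g1 g2) (delta_a h) else 0)"

definition proj :: "('x mono \<Rightarrow> 'k::field) \<Rightarrow> 'x mono \<Rightarrow> 'k" where
  "proj f = (\<lambda>m. if is_bin_mono m then f m else 0)"

text \<open>Multiplication on the graded dual of (K{X}, Delta_a), identified with K{X} via the dual
  basis of binary monomials: transpose of Delta_a restricted to K{X}.\<close>
definition dual_mult :: "('x mono \<Rightarrow> 'k::field) \<Rightarrow> ('x mono \<Rightarrow> 'k) \<Rightarrow> 'x mono \<Rightarrow> 'k" where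
  "dual_mult g1 g2 = (\<lambda>h. if is_bin_mono h then pairT (tensor g1 g2) (delta_a h) else 0)"

end

theory Submission
  imports Defs
begin

fun leaves :: "'x tree \<Rightarrow> nat" where
  "leaves (Leaf x) = 1"
| "leaves (Node ts) = sum_list (map leaves ts)"

definition lc :: "'x mono \<Rightarrow> nat" where
  "lc m = (case m of None \<Rightarrow> 0 | Some t \<Rightarrow> leaves t)"
definition labs :: "'x mono \<Rightarrow> 'x set" where
  "labs m = (case m of None \<Rightarrow> {} | Some t \<Rightarrow> set_tree t)"

lemma somes_lc: "sum_list (map lc ms) = sum_list (map leaves [t. Some t \<leftarrow> ms])"
  by (induction ms) (auto simp: lc_def split: option.splits)
lemma somes_labs: "\<Union>(labs ` set ms) = \<Union>(set_tree ` set [t. Some t \<leftarrow> ms])"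
  by (induction ms) (auto simp: labs_def split: option.splits)

lemma lc_graft: "lc (graft ms) = sum_list (map lc ms)"
proof -
  define ts where "ts = [t. Some t \<leftarrow> ms]"
  show ?thesis unfolding somes_lc ts_def[symmetric] graft_def Let_def
    by (cases ts rule: remdups_adj.cases) (auto simp: lc_def)
qed

lemma labs_graft: "labs (graft ms) = \<Union>(labs ` set ms)"
proof -
  define ts where "ts = [t. Some t \<leftarrow> ms]"
  show ?thesis unfolding somes_labs ts_def[symmetric] graft_def Let_def
    by (cases ts rule: remdups_adj.cases) (auto simp: labs_def)
qed

lemma vee_t_nz: "vee_t Ts (a,b) \<noteq> 0 \<Longrightarrow> \<exists>ps. length ps = length Ts \<and> (\<forall>i<length Ts. (Ts ! i) (ps ! i) \<noteq> 0)
        \<and> graft (map fst ps) = a \<and> graft (map snd ps) = b"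
proof (rule ccontr)
  assume a: "vee_t Ts (a,b) \<noteq> 0" and n: "\<not> (\<exists>ps. length ps = length Ts \<and> (\<forall>i<length Ts. (Ts ! i) (ps ! i) \<noteq> 0)
        \<and> graft (map fst ps) = a \<and> graft (map snd ps) = b)"
  hence "{ps. length ps = length Ts \<and> (\<forall>i<length Ts. (Ts ! i) (ps ! i) \<noteq> 0)
        \<and> graft (map fst ps) = a \<and> graft (map snd ps) = b} = {}" (is "?E = {}") by blast
  have "vee_t Ts (a,b) = 0" unfolding vee_t_def prod.case \<open>?E = {}\<close> by simp
  then show False using a by simp
qed

lemma sum_list_map_nth: "sum_list (map f xs) = (\<Sum>i<length xs. f (xs!i))"
proof -
  have "sum_list (map f xs) = (\<Sum>i<length xs. map f xs ! i)"
    by (simp add: sum_list_sum_nth atLeast0LessThan)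
  also have "\<dots> = (\<Sum>i<length xs. f (xs!i))" by (rule sum.cong) auto
  finally show ?thesis .
qed

lemma delta_struct: "deltaT t (a,b) \<noteq> (0::'k::field) \<Longrightarrow> lc a + lc b = leaves t \<and> labs a \<union> labs b = set_tree t"
proof (induction t arbitrary: a b)
  case (Leaf x)
  then show ?case by (auto simp: lc_def labs_def split: if_splits)
next
  case (Node ts)
  from Node.prems obtain ps where ps: "length ps = length ts"
    "\<And>i. i<length ts \<Longrightarrow> (deltaT (ts ! i) (ps ! i) :: 'k) \<noteq> 0"
    "graft (map fst ps) = a" "graft (map snd ps) = b"
    using vee_t_nz[of "map deltaT ts" a b] by auto
  have IH: "lc (fst (ps!i)) + lc (snd (ps!i)) = leaves (ts!i) \<and> labs (fst (ps!i)) \<union> labs (snd (ps!i)) = set_tree (ts!i)"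
    if "i < length ts" for i
    using Node.IH[of "ts!i" "fst (ps!i)" "snd (ps!i)"] ps(2)[OF that] that by auto
  have "lc a + lc b = (\<Sum>i<length ts. lc (fst (ps!i))) + (\<Sum>i<length ts. lc (snd (ps!i)))"
    using ps(1) unfolding ps(3,4)[symmetric] by (simp add: lc_graft sum_list_map_nth)
  also have "\<dots> = (\<Sum>i<length ts. leaves (ts!i))"
    using IH by (simp add: sum.distrib[symmetric])
  also have "\<dots> = leaves (Node ts)"
    by (simp add: sum_list_map_nth)
  finally have 1: "lc a + lc b = leaves (Node ts)" .
  have "labs a \<union> labs b = (\<Union>p\<in>set ps. labs (fst p)) \<union> (\<Union>p\<in>set ps. labs (snd p))"
    unfolding ps(3,4)[symmetric] by (simp add: labs_graft image_image)
  also have "\<dots> = (\<Union>i<length ts. labs (fst (ps!i)) \<union> labs (snd (ps!i)))"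
    using ps(1) by (auto simp: set_conv_nth)
  also have "\<dots> = (\<Union>i<length ts. set_tree (ts!i))"
    using IH by simp
  also have "\<dots> = set_tree (Node ts)"
    by (auto simp: set_conv_nth)
  finally show ?case using 1 by simp
qed

lemma bin_graft2: "is_bin_mono m1 \<Longrightarrow> is_bin_mono m2 \<Longrightarrow> is_bin_mono (graft [m1, m2])"
  by (cases m1; cases m2) (auto simp: graft_def is_bin_mono_def)

lemma delta_bin: "deltaT t (a,b) \<noteq> (0::'k::field) \<Longrightarrow> binary t \<Longrightarrow> is_bin_mono a \<and> is_bin_mono b"
proof (induction t arbitrary: a b)
  case (Leaf x)
  then show ?case by (auto simp: is_bin_mono_def split: if_splits)
next
  case (Node ts)
  from Node.prems obtain ps where ps: "length ps = length ts"
    "\<And>i. i<length ts \<Longrightarrow> (deltaT (ts ! i) (ps ! i) :: 'k) \<noteq> 0"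
    "graft (map fst ps) = a" "graft (map snd ps) = b"
    using vee_t_nz[of "map deltaT ts" a b] by auto
  have IH: "is_bin_mono (fst (ps!i)) \<and> is_bin_mono (snd (ps!i))"
    if "i < length ts" for i
    using Node.IH[of "ts!i" "fst (ps!i)" "snd (ps!i)"] ps(2)[OF that] that Node.prems(2) by auto
  have l2: "length ts = 2" using Node.prems(2) by simp
  then obtain p0 p1 where "ps = [p0, p1]" using ps(1)
    by (cases ps rule: remdups_adj.cases) auto
  then show ?case using IH[of 0] IH[of 1] l2 ps(3,4) bin_graft2 by auto
qed

lemma reduced_leaves: "reduced t \<Longrightarrow> 1 \<le> leaves t"
proof (induction t)
  case (Node ts)
  then obtain t where "t \<in> set ts" by (cases ts) auto
  then show ?case using Node member_le_sum_list[of "leaves t" "map leaves ts"]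
    by fastforce
qed simp

lemma length_le_sum: "(\<forall>t\<in>set ts. 1 \<le> f t) \<Longrightarrow> length ts \<le> sum_list (map f ts)"
  by (induction ts) auto

lemma finite_trees: "finite L \<Longrightarrow> finite {t. reduced t \<and> set_tree t \<subseteq> L \<and> leaves t \<le> n}"
proof (induction n)
  case 0
  have "{t. reduced t \<and> set_tree t \<subseteq> L \<and> leaves t \<le> 0} = ({}::'a tree set)"
    by (auto dest: reduced_leaves)
  then show ?case by (metis finite.emptyI)
next
  case (Suc n)
  let ?S = "{t. reduced t \<and> set_tree t \<subseteq> L \<and> leaves t \<le> n}"
  have "{t. reduced t \<and> set_tree t \<subseteq> L \<and> leaves t \<le> Suc n} \<subseteq>
     Leaf ` L \<union> Node ` {ts. set ts \<subseteq> ?S \<and> length ts \<le> Suc n}"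
  proof
    fix t assume t: "t \<in> {t. reduced t \<and> set_tree t \<subseteq> L \<and> leaves t \<le> Suc n}"
    show "t \<in> Leaf ` L \<union> Node ` {ts. set ts \<subseteq> ?S \<and> length ts \<le> Suc n}"
    proof (cases t)
      case (Leaf x) then show ?thesis using t by auto
    next
      case (Node ts)
      have red: "\<forall>s\<in>set ts. 1 \<le> leaves s" using t Node reduced_leaves by auto
      have len: "length ts \<le> Suc n" using length_le_sum[OF red] t Node by auto
      have "set ts \<subseteq> ?S"
      proof
        fix s assume s: "s \<in> set ts"
        have "2 \<le> length ts" using t Node by simp
        moreover have "length (remove1 s ts) = length ts - 1" using s by (simp add: length_remove1)
        ultimately have "remove1 s ts \<noteq> []" by auto
        then obtain r where r: "r \<in> set (remove1 s ts)" by (cases "remove1 s ts") auto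
        hence "r \<in> set ts" by (meson notin_set_remove1)
        hence "1 \<le> leaves r" using red by auto
        hence "1 \<le> sum_list (map leaves (remove1 s ts))"
          using r member_le_sum_list[of "leaves r" "map leaves (remove1 s ts)"] by auto
        moreover have "leaves t = leaves s + sum_list (map leaves (remove1 s ts))"
          using Node s by (simp add: sum_list_map_remove1)
        ultimately show "s \<in> ?S" using t s Node by auto
      qed
      then show ?thesis using len Node by auto
    qed
  qed
  moreover have "finite (Leaf ` L \<union> Node ` {ts. set ts \<subseteq> ?S \<and> length ts \<le> Suc n})"
    using Suc finite_lists_length_le by blast
  ultimately show ?case by (rule finite_subset)
qed

lemma binary_reduced: "binary t \<Longrightarrow> reduced t"
  by (induction t) auto

lemma bin_mono: "is_bin_mono h \<Longrightarrow> is_mono h"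
  by (auto simp: is_bin_mono_def is_mono_def binary_reduced split: option.splits)

lemma finite_set_tree: "finite (set_tree t)"
  by (induction t) auto

lemma finite_labs: "finite (labs m)"
  by (auto simp: labs_def finite_set_tree split: option.splits)

lemma pairT_nz: "pairT S T \<noteq> 0 \<Longrightarrow> \<exists>p. S p \<noteq> 0 \<and> T p \<noteq> 0"
  unfolding pairT_def by (metis (mono_tags, lifting) mult_eq_0_iff sum.neutral)

lemma supp_tensor: "finite {m. g1 m \<noteq> 0} \<Longrightarrow> finite {m. g2 m \<noteq> 0} \<Longrightarrow>
   finite {p. tensor g1 g2 p \<noteq> (0::'k::field)}"
  by (rule finite_subset[of _ "{m. g1 m \<noteq> 0} \<times> {m. g2 m \<noteq> 0}"]) (auto simp: tensor_def)

lemma finite_delta_supp: "finite {h. is_mono h \<and> delta_a h (a,b) \<noteq> (0::'k::field)}"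
proof -
  have "{h. is_mono h \<and> delta_a h (a,b) \<noteq> (0::'k)} \<subseteq>
    insert None (Some ` {t. reduced t \<and> set_tree t \<subseteq> labs a \<union> labs b \<and> leaves t \<le> lc a + lc b})"
  proof
    fix h assume h: "h \<in> {h. is_mono h \<and> delta_a h (a,b) \<noteq> (0::'k)}"
    show "h \<in> insert None (Some ` {t. reduced t \<and> set_tree t \<subseteq> labs a \<union> labs b \<and> leaves t \<le> lc a + lc b})"
    proof (cases h)
      case (Some t)
      then have "deltaT t (a,b) \<noteq> (0::'k)" "reduced t" using h by (auto simp: delta_a_def is_mono_def)
      moreover have "lc a + lc b = leaves t \<and> labs a \<union> labs b = set_tree t"
        by (rule delta_struct) (fact)
      ultimately show ?thesis using Some by auto
    qed simp
  qed
  moreover have "finite (insert None (Some ` {t. reduced t \<and> set_tree t \<subseteq> labs a \<union> labs b \<and> leaves t \<le> lc a + lc b}))"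
    using finite_trees[of "labs a \<union> labs b"] finite_labs by blast
  ultimately show ?thesis by (rule finite_subset)
qed

lemma delta_a_bin: "is_bin_mono h \<Longrightarrow> delta_a h p \<noteq> (0::'k::field) \<Longrightarrow> is_bin_mono (fst p) \<and> is_bin_mono (snd p)"
  using delta_bin[of _ "fst p" "snd p"]
  by (cases h) (auto simp: delta_a_def is_bin_mono_def split: if_splits)

lemma pair_proj:
  assumes f1: "finite {m. g1 m \<noteq> 0}" and f2: "finite {m. g2 m \<noteq> 0}"
    and D: "\<And>p. D p \<noteq> 0 \<Longrightarrow> is_bin_mono (fst p) \<and> is_bin_mono (snd p)"
  shows "pairT (tensor g1 g2) D = pairT (tensor (proj g1) (proj g2)) (D::_ \<Rightarrow> 'k::field)"
  unfolding pairT_def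
proof (rule sum.mono_neutral_cong_right)
  show "finite {p. tensor g1 g2 p \<noteq> 0}" using supp_tensor[OF f1 f2] .
  show "{p. tensor (proj g1) (proj g2) p \<noteq> 0} \<subseteq> {p. tensor g1 g2 p \<noteq> 0}"
    by (auto simp: tensor_def proj_def split: if_splits)
  show "\<forall>p\<in>{p. tensor g1 g2 p \<noteq> 0} - {p. tensor (proj g1) (proj g2) p \<noteq> 0}. tensor g1 g2 p * D p = 0"
    using D by (fastforce simp: tensor_def proj_def split: if_splits)
  show "\<And>p. p \<in> {p. tensor (proj g1) (proj g2) p \<noteq> 0} \<Longrightarrow> tensor g1 g2 p * D p = tensor (proj g1) (proj g2) p * D p"
    by (auto simp: tensor_def proj_def split: if_splits)
qed

theorem proposition4p6p5:
  fixes g1 g2 :: "('x::countable) mono \<Rightarrow> 'k::field_char_0"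
  assumes "g1 \<in> Kinf" and "g2 \<in> Kinf"
  shows "shuffle g1 g2 \<in> Kinf
    \<and> proj (shuffle g1 g2) = dual_mult (proj g1) (proj g2)
    \<and> (g1 \<in> KX \<and> g2 \<in> KX \<longrightarrow> dual_mult g1 g2 = proj (shuffle g1 g2))"
proof (intro conjI impI)
  have f1: "finite {m. g1 m \<noteq> 0}" and f2: "finite {m. g2 m \<noteq> 0}" using assms by (auto simp: Kinf_def)
  have "{h. shuffle g1 g2 h \<noteq> 0} \<subseteq> (\<Union>p\<in>{m. g1 m \<noteq> 0} \<times> {m. g2 m \<noteq> 0}. {h. is_mono h \<and> delta_a h p \<noteq> (0::'k)})"
  proof
    fix h assume "h \<in> {h. shuffle g1 g2 h \<noteq> 0}"
    then have m: "is_mono h" and "pairT (tensor g1 g2) (delta_a h) \<noteq> 0"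
      by (auto simp: shuffle_def split: if_splits)
    then obtain p where "tensor g1 g2 p \<noteq> 0" "delta_a h p \<noteq> (0::'k)" using pairT_nz by blast
    then show "h \<in> (\<Union>p\<in>{m. g1 m \<noteq> 0} \<times> {m. g2 m \<noteq> 0}. {h. is_mono h \<and> delta_a h p \<noteq> (0::'k)})"
      using m by (cases p) (auto simp: tensor_def)
  qed
  moreover have "finite (\<Union>p\<in>{m. g1 m \<noteq> 0} \<times> {m. g2 m \<noteq> 0}. {h. is_mono h \<and> delta_a h p \<noteq> (0::'k)})"
    using f1 f2 finite_delta_supp by auto
  ultimately have "finite {h. shuffle g1 g2 h \<noteq> 0}" by (rule finite_subset)
  then show "shuffle g1 g2 \<in> Kinf" by (auto simp: Kinf_def shuffle_def split: if_splits)
  show "proj (shuffle g1 g2) = dual_mult (proj g1) (proj g2)"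
  proof
    fix h
    show "proj (shuffle g1 g2) h = dual_mult (proj g1) (proj g2) h"
    proof (cases "is_bin_mono h")
      case True
      have eq: "pairT (tensor g1 g2) (delta_a h) = pairT (tensor (proj g1) (proj g2)) (delta_a h)"
        by (rule pair_proj[OF f1 f2 delta_a_bin[OF True]])
      show ?thesis using True bin_mono[OF True]
        unfolding proj_def[of "shuffle g1 g2"] by (simp add: shuffle_def dual_mult_def eq)
    qed (simp add: proj_def dual_mult_def)
  qed
  show "dual_mult g1 g2 = proj (shuffle g1 g2)" 
    by (auto simp: dual_mult_def proj_def shuffle_def bin_mono)
qed

end
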